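(* Let $(x_0,x_1)$ be a state of nonnegative integers with $ch(x_0,x_1)\geq 1$ and $x_1\geq x_0-1\geq 1$. Then there exists a legal question $(a_0,a_1)$ such that, whichever answer Carole gives, the next state $(y_0,y_1)$ satisfies (i) $\lfloor x_0/2\rfloor\leq y_0\leq\lceil x_0/2\rceil$; (ii) $y_1\geq y_0-1$; (iii) $ch(y_0,y_1)\geq ch(x_0,x_1)-1$.
   Context: Liar game with $1$ lie: a state is a pair $(x_0,x_1)$ of nonnegative integers; a legal question is a pair $(a_0,a_1)$ of integers with $0\leq a_i\leq x_i$; after Carole's answer Y the next state is $(a_0,\,a_1+x_0-a_0)$, after N it is $(x_0-a_0,\,x_1-a_1+a_0)$. Weight: $wt_q(x_0,x_1)=(q+1)x_0+x_1$. The character $ch(x_0,x_1)$ is the maximum integer $q\geq 0$ such that $wt_q(x_0,x_1)\geq 2^q$. *)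

theory Defs
  imports Main
begin

type_synonym state = "nat \<times> nat"

definition wt :: "nat \<Rightarrow> state \<Rightarrow> nat" where
  "wt q s = (q + 1) * fst s + snd s"

text \<open>Character: the maximum q such that wt_q(x) \<ge> 2^q (the set is finite since 2^q grows faster).\<close>
definition ch :: "state \<Rightarrow> nat" where
  "ch s = (GREATEST q. wt q s \<ge> 2 ^ q)"

definition legal :: "state \<Rightarrow> nat \<times> nat \<Rightarrow> bool" where
  "legal s a \<longleftrightarrow> fst a \<le> fst s \<and> snd a \<le> snd s"

definition yes_state :: "state \<Rightarrow> nat \<times> nat \<Rightarrow> state" where
  "yes_state s a = (fst a, snd a + fst s - fst a)"

definition no_state :: "state \<Rightarrow> nat \<times> nat \<Rightarrow> state" where
  "no_state s a = (fst s - fst a, snd s - snd a + fst a)"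

end

theory Submission
  imports Defs
begin

lemma pow_big: "q \<ge> 2*n+4 \<Longrightarrow> (q+1)*n < (2::nat)^q"
proof (induction q rule: dec_induct)
  case base
  have a: "n + 1 \<le> (2::nat)^n" by (induction n) auto
  have "(2*n+4+1)*n < 16*((n+1)*(n+1))" by (simp add: algebra_simps)
  also have "\<dots> \<le> 16*(2^n*2^n)" using mult_le_mono[OF a a] by simp
  also have "\<dots> = (2::nat)^(2*n+4)" by (simp add: power_add mult_2 [symmetric] power_mult_distrib) (simp add: power_add[symmetric] mult_2)
  finally show ?case .
next
  case (step q)
  then show ?case by simp
qed

lemma wt_bound: "wt q s \<ge> 2^q \<Longrightarrow> q \<le> 2*(fst s + snd s)+4"
proof (rule ccontr)
  assume h: "wt q s \<ge> 2^q" "\<not> q \<le> 2*(fst s + snd s)+4"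
  have "wt q s \<le> (q+1)*(fst s + snd s)" unfolding wt_def by (simp add: algebra_simps)
  also have "\<dots> < 2^q" using h(2) pow_big[of "fst s + snd s" q] by simp
  finally show False using h(1) by simp
qed

lemma ch_prop: "wt k s \<ge> 2^k \<Longrightarrow> wt (ch s) s \<ge> 2^(ch s)"
  unfolding ch_def by (rule GreatestI_nat[where b="2*(fst s + snd s)+4"]) (auto dest!: wt_bound)

lemma ch_ge: "wt k s \<ge> 2^k \<Longrightarrow> k \<le> ch s"
  unfolding ch_def by (rule Greatest_le_nat[where b="2*(fst s + snd s)+4"]) (auto dest!: wt_bound)

theorem lemma13:
  fixes x0 x1 :: nat
  assumes "ch (x0, x1) \<ge> 1"
    and "int x1 \<ge> int x0 - 1" and "int x0 - 1 \<ge> 1"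
  shows "\<exists>a. legal (x0, x1) a \<and>
    (\<forall>y \<in> {yes_state (x0, x1) a, no_state (x0, x1) a}.
        x0 div 2 \<le> fst y \<and> fst y \<le> (x0 + 1) div 2
      \<and> int (snd y) \<ge> int (fst y) - 1
      \<and> int (ch y) \<ge> int (ch (x0, x1)) - 1)"
proof -
  define q where "q = ch (x0, x1)"
  obtain Q where Q: "q = Suc Q" using assms(1) unfolding q_def by (metis One_nat_def Suc_le_D)
  have w0: "wt 0 (x0, x1) \<ge> 2^0" using assms(3) by (simp add: wt_def)
  have wq: "wt q (x0, x1) \<ge> 2^q" unfolding q_def by (rule ch_prop[OF w0])
  have key: "\<exists>a0 a1. a0 \<le> x0 \<and> a1 \<le> x1 \<and> x0 div 2 \<le> a0 \<and> a0 \<le> (x0+1) div 2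
     \<and> \<bar>int (q-1) * (2*int a0 - int x0) + 2*int a1 - int x1\<bar> \<le> 1"
  proof (cases "even x0")
    case True
    then show ?thesis
      by (intro exI[of _ "x0 div 2"] exI[of _ "x1 div 2"]) auto
  next
    case False
    have x1q: "x1 + 2 \<ge> q"
    proof (rule ccontr)
      assume c: "\<not> x1 + 2 \<ge> q"
      have "x1 \<ge> 2" using assms(2,3) False by (auto elim!: oddE)
      hence q5: "q \<ge> 5" using c by simp
      have "2^q \<le> (q+1)*x0 + x1" using wq by (simp add: wt_def)
      also have "\<dots> \<le> (q+1)*(x1+1) + x1"
      proof -
        have "x0 \<le> x1 + 1" using assms(2) by simp
        then have "(q+1)*x0 \<le> (q+1)*(x1+1)" by (rule mult_le_mono2)
        then show ?thesis by (rule add_le_mono1)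
      qed
      also have "\<dots> \<le> (q+1)*(q-2) + (q-3)"
      proof -
        have "x1 + 1 \<le> q - 2" "x1 \<le> q - 3" using c by auto
        then show ?thesis using mult_le_mono2[of "x1+1" "q-2" "q+1"] by linarith
      qed
      also have "\<dots> < q*q"
      proof -
        obtain r where r: "q = r + 5" using q5 by (metis add.commute le_Suc_ex)
        show ?thesis unfolding r by (simp add: algebra_simps)
      qed
      finally have "2^q < q*q" .
      moreover have "q*q \<le> (2::nat)^q" using q5
      proof (induction q rule: dec_induct)
        case base then show ?case by simp
      next
        case (step n)
        have "Suc n * Suc n \<le> 2*(n*n)" using step(1)
        proof -
          obtain r where r: "n = r + 5" using step(1) by (metis add.commute le_Suc_ex)
          show ?thesis unfolding r by (simp add: algebra_simps)
        qed
        then show ?case using step(3) by simp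
      qed
      ultimately show False by simp
    qed
    show ?thesis
      by (intro exI[of _ "(x0+1) div 2"] exI[of _ "(x1 + 1 - q) div 2"]) (use False x1q Q in \<open>auto elim!: oddE\<close>)
  qed
  then obtain a0 a1 where a: "a0 \<le> x0" "a1 \<le> x1" "x0 div 2 \<le> a0" "a0 \<le> (x0+1) div 2"
     "\<bar>int (q-1) * (2*int a0 - int x0) + 2*int a1 - int x1\<bar> \<le> 1" by blast
  define Y where "Y = yes_state (x0, x1) (a0, a1)"
  define N where "N = no_state (x0, x1) (a0, a1)"
  have Yv: "Y = (a0, a1 + x0 - a0)" unfolding Y_def yes_state_def by simp
  have Nv: "N = (x0 - a0, x1 - a1 + a0)" unfolding N_def no_state_def by simp
  have wti: "\<And>s. int (wt Q s) = (int Q + 1) * int (fst s) + int (snd s)" by (simp add: wt_def algebra_simps)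
  have Y0: "int (fst Y) = int a0" and Y1: "int (snd Y) = int a1 + int x0 - int a0"
    using a(1) by (auto simp: Yv of_nat_diff)
  have N0: "int (fst N) = int x0 - int a0" and N1: "int (snd N) = int x1 - int a1 + int a0"
    using a(1,2) by (auto simp: Nv of_nat_diff)
  have wq': "int (wt q (x0, x1)) = (int Q + 2) * int x0 + int x1" by (simp add: wt_def Q algebra_simps)
  have a5: "\<bar>int Q * (2*int a0 - int x0) + 2*int a1 - int x1\<bar> \<le> 1" using a(5) Q by simp
  have sum: "int (wt Q Y) + int (wt Q N) = int (wt q (x0, x1))"
    unfolding wti wq' Y0 Y1 N0 N1 by (simp add: algebra_simps)
  have diff: "\<bar>int (wt Q Y) - int (wt Q N)\<bar> \<le> 1"
    using a5 unfolding wti Y0 Y1 N0 N1 by (simp add: algebra_simps)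
  have pq: "int (2^q) = 2 * 2^Q" using Q by simp
  have W: "int (wt q (x0, x1)) \<ge> 2 * 2^Q" using wq pq by (metis of_nat_le_iff)
  have ar: "\<And>A B W P::int. A + B = W \<Longrightarrow> \<bar>A - B\<bar> \<le> 1 \<Longrightarrow> W \<ge> 2*P \<Longrightarrow> A \<ge> P \<and> B \<ge> P"
    by arith
  have "int (wt Q Y) \<ge> 2^Q \<and> int (wt Q N) \<ge> 2^Q" by (rule ar[OF sum diff W])
  hence wY: "wt Q Y \<ge> 2^Q" and wN: "wt Q N \<ge> 2^Q" by (metis of_nat_le_iff of_nat_numeral of_nat_power)+
  have cY: "Q \<le> ch Y" by (rule ch_ge[OF wY])
  have cN: "Q \<le> ch N" by (rule ch_ge[OF wN])
  show ?thesis
    apply (rule exI[of _ "(a0, a1)"])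
    using a cY cN Q unfolding legal_def q_def[symmetric] Y_def[symmetric] N_def[symmetric]
    by (auto simp: Yv Nv)
qed

end
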